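(* Let $\mathcal D^S$ denote the class of all functions $d:\mathbb{R}^n\times\mathbb{R}^n\to\mathbb{R}$ of the form $$d(x,y)=\phi(x)-\phi(y)-\langle s(y),\,x-y\rangle\qquad(x,y\in\mathbb{R}^n),$$ where $\phi:\mathbb{R}^n\to\mathbb{R}$ is a (finite-valued) convex function and $s:\mathbb{R}^n\to\mathbb{R}^n$ is a subgradient map of $\phi$, i.e. $s(y)\in\partial\phi(y)$ for every $y$. Let $d:\mathbb{R}^n\times\mathbb{R}^n\to\mathbb{R}$ be a divergence, i.e. $d(x,y)\ge 0$ for all $x,y$ and $d(y,y)=0$ for all $y$. Then $d\in\mathcal D^S$ if and only if both of the following hold: (i) for every $a\in\mathbb{R}^n$, the map $x\mapsto d(x,a)$ is convex; (ii) for every $a,b\in\mathbb{R}^n$, the map $x\mapsto d(x,a)-d(x,b)$ is affine, i.e. of the form $x\mapsto\langle h,x\rangle+c$ for some $h\in\mathbb{R}^n$ and $c\in\mathbb{R}$.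
   Context: $\partial\phi(y)=\{g\in\mathbb{R}^n:\ \phi(x)\ge\phi(y)+\langle g,x-y\rangle\ \forall x\}$ denotes the subdifferential of the convex function $\phi$ at $y$. The divergences in $\mathcal D^S$ are called generalized Bregman divergences. *)

theory Defs
  imports "HOL-Analysis.Analysis"
begin

definition subdifferential :: "(real^'n \<Rightarrow> real) \<Rightarrow> real^'n \<Rightarrow> (real^'n) set" where
  "subdifferential \<phi> y = {g. \<forall>x. \<phi> x \<ge> \<phi> y + inner g (x - y)}"

definition divergence :: "(real^'n \<Rightarrow> real^'n \<Rightarrow> real) \<Rightarrow> bool" where
  "divergence d \<longleftrightarrow> (\<forall>x y. d x y \<ge> 0) \<and> (\<forall>y. d y y = 0)"

definition gen_bregman :: "(real^'n \<Rightarrow> real^'n \<Rightarrow> real) set" where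
  "gen_bregman = {d. \<exists>\<phi> s. convex_on UNIV \<phi> \<and> (\<forall>y. s y \<in> subdifferential \<phi> y) \<and>
       (\<forall>x y. d x y = \<phi> x - \<phi> y - inner (s y) (x - y))}"

end

theory Submission
  imports Defs
begin

lemma conv_aux:
  fixes \<phi> :: "real^'n \<Rightarrow> real"
  assumes "convex_on UNIV \<phi>"
  shows "convex_on UNIV (\<lambda>x. \<phi> x - k - inner g (x - a))"
proof -
  have "convex_on UNIV (\<lambda>x. \<phi> x + (- k + inner g a - inner g x))"
  proof (rule convex_on_add[OF assms])
    show "convex_on UNIV (\<lambda>x. - k + inner g a - inner g x)"
    proof (rule convex_onI)
      fix t :: real and x y :: "real^'n"
      show "- k + inner g a - inner g ((1 - t) *\<^sub>R x + t *\<^sub>R y)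
         \<le> (1 - t) * (- k + inner g a - inner g x) + t * (- k + inner g a - inner g y)"
        by (simp add: inner_add_right inner_scaleR_right algebra_simps)
    qed simp
  qed
  then show ?thesis by (simp add: inner_diff_right algebra_simps)
qed

theorem theorem1:
  fixes d :: "real^'n \<Rightarrow> real^'n \<Rightarrow> real"
  assumes "divergence d"
  shows "d \<in> gen_bregman \<longleftrightarrow>
    ((\<forall>a. convex_on UNIV (\<lambda>x. d x a)) \<and>
     (\<forall>a b. \<exists>h c. \<forall>x. d x a - d x b = inner h x + c))"
proof
  assume "d \<in> gen_bregman"
  then obtain \<phi> s where cv: "convex_on UNIV \<phi>" and
    dd: "\<forall>x y. d x y = \<phi> x - \<phi> y - inner (s y) (x - y)"
    unfolding gen_bregman_def by blast
  show "((\<forall>a. convex_on UNIV (\<lambda>x. d x a)) \<and>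
     (\<forall>a b. \<exists>h c. \<forall>x. d x a - d x b = inner h x + c))"
  proof (intro conjI allI)
    fix a show "convex_on UNIV (\<lambda>x. d x a)"
      using conv_aux[OF cv, of "\<phi> a" "s a" a] by (simp add: dd)
  next
    fix a b
    show "\<exists>h c. \<forall>x. d x a - d x b = inner h x + c"
      by (rule exI[of _ "s b - s a"], rule exI[of _ "\<phi> b - \<phi> a + inner (s a) a - inner (s b) b"])
        (simp add: dd inner_diff_right inner_diff_left algebra_simps)
  qed
next
  assume H: "((\<forall>a. convex_on UNIV (\<lambda>x. d x a)) \<and>
     (\<forall>a b. \<exists>h c. \<forall>x. d x a - d x b = inner h x + c))"
  define \<phi> where "\<phi> x = d x 0" for x
  have cv: "convex_on UNIV \<phi>" using H unfolding \<phi>_def by simp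
  have "\<forall>y. \<exists>h c. \<forall>x. d x y - d x 0 = inner h x + c" using H by blast
  then obtain h c where hc: "\<And>y x. d x y - d x 0 = inner (h y) x + c y" by metis
  have d0: "\<And>y. d y y = 0" and dn: "\<And>x y. d x y \<ge> 0"
    using assms unfolding divergence_def by auto
  have cy: "c y = - \<phi> y - inner (h y) y" for y
    using hc[of y y] d0[of y] unfolding \<phi>_def by simp
  have dd: "d x y = \<phi> x - \<phi> y - inner (- h y) (x - y)" for x y
  proof -
    have e: "d x y = d x 0 + inner (h y) x + c y" using hc[where y=y and x=x] by linarith
    show ?thesis unfolding e cy \<phi>_def by (simp add: inner_diff_right inner_minus_left)
  qed
  have sub: "- h y \<in> subdifferential \<phi> y" for y
    unfolding subdifferential_def
  proof (intro CollectI allI)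
    fix x show "\<phi> y + inner (- h y) (x - y) \<le> \<phi> x" using dn[of x y] dd[of x y] by linarith
  qed
  show "d \<in> gen_bregman"
    unfolding gen_bregman_def
    apply (rule CollectI, rule exI[of _ \<phi>], rule exI[of _ "\<lambda>y. - h y"])
    using cv sub dd by simp
qed

end
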